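(* Let $A(z)=\sum_{n\ge0}a_nz^n$ be the generating function of Dyck arches ending with a catastrophe. Then for $n\ge2$, $a_n=\binom{n-2}{\lfloor\frac{n-3}{2}\rfloor}$ (and $a_0=a_1=0$), and \[A(z)=z\,\frac{M(z)-E(z)-M_1(z)}{E(z)}=\frac12\,\frac{2z^2+z-1+\sqrt{(1-2z)(1+2z)(1-z)^2}}{1-2z}=z^3+z^4+3z^5+4z^6+10z^7+15z^8+35z^9+O(z^{10}),\] where $M(z)$, $E(z)$, $M_1(z)$ are the generating functions (by length) of classical Dyck meanders, Dyck excursions, and Dyck meanders ending at altitude $1$, respectively.
   Context: Classical Dyck paths use steps $+1$ and $-1$ (each of weight $1$) and never go below altitude $0$, starting at $0$; a Dyck meander may end anywhere, a Dyck excursion ends at $0$. A Dyck path with catastrophes additionally allows catastrophes: steps from an altitude $h>1$ directly to altitude $0$ (weight $1$). A Dyck arch ending with a catastrophe is a Dyck path with catastrophes starting at altitude $0$ whose last step is a catastrophe and which does not visit altitude $0$ between its start and its end. *)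

theory Defs
  imports Complex_Main "HOL-Computational_Algebra.Formal_Power_Series"
begin

text \<open>Steps: U = +1, D = -1, C = catastrophe (jump from altitude h > 1 to 0); each of weight 1.\<close>
datatype step = U | D | C

fun valid_from :: "nat \<Rightarrow> step list \<Rightarrow> bool" where
  "valid_from h [] = True"
| "valid_from h (U # s) = valid_from (h + 1) s"
| "valid_from h (D # s) = (1 \<le> h \<and> valid_from (h - 1) s)"
| "valid_from h (C # s) = (1 < h \<and> valid_from 0 s)"

text \<open>Altitudes reached after each step (the i-th entry is the altitude after step i+1).\<close>
fun alts :: "nat \<Rightarrow> step list \<Rightarrow> nat list" where
  "alts h [] = []"
| "alts h (U # s) = (h + 1) # alts (h + 1) s"
| "alts h (D # s) = (h - 1) # alts (h - 1) s"
| "alts h (C # s) = 0 # alts 0 s"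

definition end_alt :: "step list \<Rightarrow> nat" where
  "end_alt s = (if s = [] then 0 else last (alts 0 s))"

definition dyck_cat_path :: "step list \<Rightarrow> bool" where
  "dyck_cat_path s \<longleftrightarrow> valid_from 0 s"

definition dyck_meander :: "step list \<Rightarrow> bool" where
  "dyck_meander s \<longleftrightarrow> valid_from 0 s \<and> C \<notin> set s"

definition dyck_excursion :: "step list \<Rightarrow> bool" where
  "dyck_excursion s \<longleftrightarrow> dyck_meander s \<and> end_alt s = 0"

definition dyck_meander1 :: "step list \<Rightarrow> bool" where
  "dyck_meander1 s \<longleftrightarrow> dyck_meander s \<and> end_alt s = 1"

definition cat_arch :: "step list \<Rightarrow> bool" where
  "cat_arch s \<longleftrightarrow> dyck_cat_path s \<and> s \<noteq> [] \<and> last s = C \<and>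
     (\<forall>i < length s - 1. alts 0 s ! i \<noteq> 0)"

definition count_len :: "(step list \<Rightarrow> bool) \<Rightarrow> nat \<Rightarrow> nat" where
  "count_len P n = card {s. length s = n \<and> P s}"

definition gf :: "(step list \<Rightarrow> bool) \<Rightarrow> real fps" where
  "gf P = Abs_fps (\<lambda>n. real (count_len P n))"

end

theory Submission
  imports Defs "HOL-Analysis.Analysis"
begin


fun ht :: "nat \<Rightarrow> step list \<Rightarrow> nat" where
  "ht h [] = h"
| "ht h (U # s) = ht (h + 1) s"
| "ht h (D # s) = ht (h - 1) s"
| "ht h (C # s) = ht 0 s"

lemma length_alts[simp]: "length (alts h s) = length s"
  by (induction h s rule: alts.induct) auto

lemma alts_Nil_iff[simp]: "alts h s = [] \<longleftrightarrow> s = []"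
  by (metis length_alts length_0_conv)

lemma last_alts: "s \<noteq> [] \<Longrightarrow> last (alts h s) = ht h s"
proof (induction s arbitrary: h)
  case Nil then show ?case by simp
next
  case (Cons x s) then show ?case by (cases x; cases s) auto
qed

lemma end_alt_ht: "end_alt s = ht 0 s"
  by (simp add: end_alt_def last_alts)

lemma finite_step_UNIV: "finite (UNIV :: step set)"
proof -
  have "(UNIV :: step set) = {U, D, C}" by (auto intro: step.exhaust)
  then show ?thesis by (metis finite_insert finite.emptyI)
qed

lemma finite_len: "finite {s :: step list. length s = m}"
proof -
  have "finite {s :: step list. set s \<subseteq> UNIV \<and> length s = m}"
    by (rule finite_lists_length_eq[OF finite_step_UNIV])
  then show ?thesis by simp
qed

lemma card_split:
  fixes S :: "step list set"
  assumes "finite S" "[] \<notin> S"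
  shows "card S = card {t. U # t \<in> S} + card {t. D # t \<in> S} + card {t. C # t \<in> S}"
proof -
  have eq: "S = (Cons U ` {t. U # t \<in> S} \<union> Cons D ` {t. D # t \<in> S}) \<union> Cons C ` {t. C # t \<in> S}"
  proof (intro equalityI subsetI)
    fix s assume "s \<in> S"
    with assms(2) obtain x t where "s = x # t" by (cases s) auto
    with \<open>s \<in> S\<close> show "s \<in> (Cons U ` {t. U # t \<in> S} \<union> Cons D ` {t. D # t \<in> S}) \<union> Cons C ` {t. C # t \<in> S}"
      by (cases x) auto
  qed auto
  have f: "finite {t. x # t \<in> S}" for x
    using finite_vimageI[OF assms(1), of "Cons x"] by (simp add: vimage_def)
  have "card S = card (Cons U ` {t. U # t \<in> S} \<union> Cons D ` {t. D # t \<in> S}) + card (Cons C ` {t. C # t \<in> S})"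
    by (subst eq, rule card_Un_disjoint) (use f in auto)
  also have "card (Cons U ` {t. U # t \<in> S} \<union> Cons D ` {t. D # t \<in> S}) = card (Cons U ` {t. U # t \<in> S}) + card (Cons D ` {t. D # t \<in> S})"
    by (rule card_Un_disjoint) (use f in auto)
  finally show ?thesis by (simp add: card_image)
qed

fun W :: "(nat \<Rightarrow> bool) \<Rightarrow> nat \<Rightarrow> nat \<Rightarrow> nat" where
  "W \<phi> 0 h = (if \<phi> h then 1 else 0)"
| "W \<phi> (Suc m) h = W \<phi> m (Suc h) + (if 1 \<le> h then W \<phi> m (h - 1) else 0)"

lemma card_W: "card {s. length s = m \<and> valid_from h s \<and> C \<notin> set s \<and> \<phi> (ht h s)} = W \<phi> m h"
proof (induction m arbitrary: h)
  case 0
  have "{s. length s = 0 \<and> valid_from h s \<and> C \<notin> set s \<and> \<phi> (ht h s)} = (if \<phi> h then {[]} else {})"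
    by auto
  then show ?case by simp
next
  case (Suc m)
  let ?S = "{s. length s = Suc m \<and> valid_from h s \<and> C \<notin> set s \<and> \<phi> (ht h s)}"
  have fin: "finite ?S" by (rule finite_subset[OF _ finite_len[of "Suc m"]]) auto
  have "card ?S = card {t. U # t \<in> ?S} + card {t. D # t \<in> ?S} + card {t. C # t \<in> ?S}"
    by (rule card_split[OF fin]) auto
  also have "{t. U # t \<in> ?S} = {s. length s = m \<and> valid_from (Suc h) s \<and> C \<notin> set s \<and> \<phi> (ht (Suc h) s)}"
    by auto
  also have "{t. D # t \<in> ?S} = (if 1 \<le> h then {s. length s = m \<and> valid_from (h - 1) s \<and> C \<notin> set s \<and> \<phi> (ht (h - 1) s)} else {})"
    by auto
  also have "{t. C # t \<in> ?S} = {}" by auto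
  finally show ?case using Suc by simp
qed

definition archQ :: "nat \<Rightarrow> step list \<Rightarrow> bool" where
  "archQ h s \<longleftrightarrow> valid_from h s \<and> s \<noteq> [] \<and> last s = C \<and> (\<forall>i < length s - 1. alts h s ! i \<noteq> 0)"

lemma archQ_Nil[simp]: "\<not> archQ h []" by (simp add: archQ_def)

lemma archQ_U: "archQ h (U # t) \<longleftrightarrow> archQ (Suc h) t"
proof (cases t)
  case Nil then show ?thesis by (simp add: archQ_def)
next
  case (Cons y ys)
  then show ?thesis
    by (simp add: archQ_def All_less_Suc2)
qed

lemma archQ_D: "archQ h (D # t) \<longleftrightarrow> 2 \<le> h \<and> archQ (h - 1) t"
proof (cases t)
  case Nil then show ?thesis by (simp add: archQ_def)
next
  case (Cons y ys)
  then show ?thesis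
    by (auto simp add: archQ_def All_less_Suc2)
qed

lemma archQ_C: "archQ h (C # t) \<longleftrightarrow> t = [] \<and> 1 < h"
proof (cases t)
  case Nil then show ?thesis by (simp add: archQ_def)
next
  case (Cons y ys)
  then show ?thesis
    by (auto simp add: archQ_def All_less_Suc2)
qed

fun ar :: "nat \<Rightarrow> nat \<Rightarrow> nat" where
  "ar 0 h = 0"
| "ar (Suc m) h = ar m (Suc h) + (if 2 \<le> h then ar m (h - 1) else 0) + (if m = 0 \<and> 1 < h then 1 else 0)"

lemma card_ar: "card {s. length s = m \<and> archQ h s} = ar m h"
proof (induction m arbitrary: h)
  case 0
  then show ?case by (simp add: archQ_def)
next
  case (Suc m)
  let ?S = "{s. length s = Suc m \<and> archQ h s}"
  have fin: "finite ?S" by (rule finite_subset[OF _ finite_len[of "Suc m"]]) auto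
  have "card ?S = card {t. U # t \<in> ?S} + card {t. D # t \<in> ?S} + card {t. C # t \<in> ?S}"
    by (rule card_split[OF fin]) auto
  also have "{t. U # t \<in> ?S} = {s. length s = m \<and> archQ (Suc h) s}"
    by (auto simp: archQ_U)
  also have "{t. D # t \<in> ?S} = (if 2 \<le> h then {s. length s = m \<and> archQ (h - 1) s} else {})"
    by (auto simp: archQ_D)
  also have "{t. C # t \<in> ?S} = (if m = 0 \<and> 1 < h then {[]} else {})"
    by (auto simp: archQ_C)
  finally show ?case using Suc by simp
qed

lemma a_ar: "count_len cat_arch n = ar n 0"
proof -
  have "cat_arch = archQ 0" by (auto simp: fun_eq_iff cat_arch_def archQ_def dyck_cat_path_def)
  then show ?thesis unfolding count_len_def by (metis card_ar)
qed

lemma count_W: "count_len (\<lambda>s. dyck_meander s \<and> \<phi> (end_alt s)) n = W \<phi> n 0"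
  by (simp add: count_len_def dyck_meander_def end_alt_ht card_W[symmetric] conj_assoc)



definition B :: "nat \<Rightarrow> int \<Rightarrow> int" where
  "B m t = (if 0 \<le> t then int (m choose nat t) else 0)"

definition P :: "nat \<Rightarrow> int \<Rightarrow> int" where
  "P m j = (if even (int m + j) then B m ((int m + j) div 2) else 0)"

definition g :: "nat \<Rightarrow> nat \<Rightarrow> nat \<Rightarrow> int" where
  "g m h k = P m (int k - int h) - P m (int k + int h + 2)"

lemma B_Suc: "B (Suc m) t = B m (t - 1) + B m t"
proof -
  consider "t < 0" | "t = 0" | "t \<ge> 1" by linarith
  then show ?thesis
  proof cases
    case 3
    define k where "k = nat (t - 1)"
    have k: "t = int (Suc k)" using 3 unfolding k_def by simp
    have k': "t - 1 = int k" using k by simp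
    have "B (Suc m) t = int (Suc m choose Suc k)" unfolding B_def k by (simp only: nat_int) simp
    moreover have "B m (t - 1) = int (m choose k)" unfolding B_def k' by simp
    moreover have "B m t = int (m choose Suc k)" unfolding B_def k by (simp only: nat_int) simp
    ultimately show ?thesis by simp
  qed (auto simp: B_def)
qed

lemma P_Suc: "P (Suc m) j = P m (j - 1) + P m (j + 1)"
proof (cases "even (int m + 1 + j)")
  case True
  define t where "t = (int m + 1 + j) div 2"
  have a1: "P (Suc m) j = B (Suc m) t"
    unfolding P_def t_def using True by (simp add: ac_simps)
  have a2: "P m (j - 1) = B m (t - 1)"
  proof -
    have "even (int m + (j - 1))" using True by presburger
    moreover have "(int m + (j - 1)) div 2 = t - 1" unfolding t_def using True by presburger
    ultimately show ?thesis unfolding P_def by simp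
  qed
  have a3: "P m (j + 1) = B m t"
  proof -
    have "even (int m + (j + 1))" using True by presburger
    moreover have "(int m + (j + 1)) div 2 = t" unfolding t_def by presburger
    ultimately show ?thesis unfolding P_def by simp
  qed
  show ?thesis using a1 a2 a3 B_Suc by simp
next
  case False
  have "odd (int (Suc m) + j)" using False by simp
  moreover have "odd (int m + (j - 1))" using False by presburger
  moreover have "odd (int m + (j + 1))" using False by presburger
  ultimately show ?thesis unfolding P_def by simp
qed

lemma B_sym: "B m (int m - t) = B m t"
proof -
  consider "t < 0" | "t > int m" | "0 \<le> t \<and> t \<le> int m" by linarith
  then show ?thesis
  proof cases
    case 1 then show ?thesis by (simp add: B_def binomial_eq_0)
  next
    case 2 then show ?thesis by (simp add: B_def)
  next
    case 3
    then obtain k where k: "t = int k" "k \<le> m" by (metis nonneg_int_cases of_nat_le_iff)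
    have "nat (int m - t) = m - k" using k by simp
    then show ?thesis using k by (simp add: B_def binomial_symmetric[symmetric])
  qed
qed

lemma P_sym: "P m (- j) = P m j"
proof (cases "even (int m + j)")
  case True
  have "(int m + - j) div 2 = int m - (int m + j) div 2" using True by presburger
  then show ?thesis using True unfolding P_def by (simp add: B_sym)
next
  case False
  then show ?thesis unfolding P_def by presburger
qed

lemma P_big: assumes "j > int m" shows "P m j = 0"
proof (cases "even (int m + j)")
  case True
  then have "(int m + j) div 2 \<ge> int m + 1" using assms by presburger
  then have "nat ((int m + j) div 2) > m" by linarith
  then show ?thesis unfolding P_def B_def by (simp add: binomial_eq_0)
next
  case False then show ?thesis unfolding P_def by simp
qed

lemma g_Suc: "g (Suc m) h k = g m (Suc h) k + (if 1 \<le> h then g m (h - 1) k else 0)"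
  unfolding g_def by (cases h) (auto simp: P_Suc algebra_simps)

lemma P_0: "P 0 j = (if j = 0 then 1 else 0)"
  unfolding P_def B_def by auto

lemma W_closed: "N \<ge> m + h + 1 \<Longrightarrow> int (W \<phi> m h) = (\<Sum>k<N. if \<phi> k then g m h k else 0)"
proof (induction m arbitrary: h)
  case 0
  have "(\<Sum>k<N. if \<phi> k then g 0 h k else 0) = (\<Sum>k<N. if k = h then (if \<phi> k then 1 else 0) else 0)"
    by (rule sum.cong) (auto simp: g_def P_0)
  also have "\<dots> = (if \<phi> h then 1 else 0)" using 0 by (simp add: sum.delta)
  finally show ?case by simp
next
  case (Suc m)
  have "int (W \<phi> (Suc m) h) = int (W \<phi> m (Suc h)) + (if 1 \<le> h then int (W \<phi> m (h - 1)) else 0)" by simp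
  also have "\<dots> = (\<Sum>k<N. if \<phi> k then g m (Suc h) k else 0) + (if 1 \<le> h then (\<Sum>k<N. if \<phi> k then g m (h-1) k else 0) else 0)"
    using Suc.IH[of "Suc h"] Suc.IH[of "h - 1"] Suc.prems by simp
  also have "\<dots> = (\<Sum>k<N. if \<phi> k then g (Suc m) h k else 0)"
    by (auto simp: g_Suc sum.distrib[symmetric] intro!: sum.cong)
  finally show ?case .
qed

lemma W_disj: "(\<And>x. \<not> (\<phi> x \<and> \<psi> x)) \<Longrightarrow> W (\<lambda>x. \<phi> x \<or> \<psi> x) m h = W \<phi> m h + W \<psi> m h"
  by (induction m arbitrary: h) auto

lemma conv_gen:
  fixes F G :: "nat \<Rightarrow> nat \<Rightarrow> nat"
  assumes G0: "\<And>h. G 0 h = (if 1 \<le> h then F 0 (h - 1) else 0)"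
    and FS: "\<And>m h. F (Suc m) h = F m (Suc h) + (if 1 \<le> h then F m (h - 1) else 0)"
    and GS: "\<And>m h. G (Suc m) h = G m (Suc h) + (if 1 \<le> h then G m (h - 1) else 0)"
  shows "G m h = (if 1 \<le> h then F m (h - 1) else 0) + (\<Sum>i<m. W (\<lambda>x. x = 0) i h * F (m - 1 - i) 0)"
proof (induction m arbitrary: h)
  case 0 then show ?case using G0 by simp
next
  case (Suc m)
  let ?E = "W (\<lambda>x. x = 0)"
  have s1: "(\<Sum>i<Suc m. ?E i h * F (Suc m - 1 - i) 0) = ?E 0 h * F m 0 + (\<Sum>i<m. ?E (Suc i) h * F (m - 1 - i) 0)"
    by (subst sum.lessThan_Suc_shift) simp
  have s2: "(\<Sum>i<m. ?E (Suc i) h * F (m - 1 - i) 0) = (\<Sum>i<m. ?E i (Suc h) * F (m - 1 - i) 0)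
       + (if 1 \<le> h then (\<Sum>i<m. ?E i (h - 1) * F (m - 1 - i) 0) else 0)"
    by (cases h) (simp_all add: sum.distrib distrib_right)
  define S where "S = (\<lambda>h. (\<Sum>i<m. ?E i h * F (m - 1 - i) 0))"
  have IH: "G m h' = (if 1 \<le> h' then F m (h' - 1) else 0) + S h'" for h'
    unfolding S_def by (rule Suc.IH)
  have sum_eq: "(\<Sum>i<Suc m. ?E i h * F (Suc m - 1 - i) 0) = (if h = 0 then F m 0 else 0) + S (Suc h) + (if 1 \<le> h then S (h - 1) else 0)"
    unfolding s1 s2 S_def by simp
  show ?case
  proof (cases h)
    case 0
    then show ?thesis unfolding GS sum_eq using IH[of 1] by simp
  next
    case (Suc h')
    have "F (Suc m) h' = F m (Suc h') + (if 1 \<le> h' then F m (h' - 1) else 0)" by (rule FS)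
    then show ?thesis unfolding GS sum_eq using Suc IH[of "Suc h"] IH[of h'] by auto
  qed
qed

lemma conv_W:
  "W (\<lambda>x. 1 \<le> x \<and> \<phi> (x - 1)) m 0 = (\<Sum>i<m. W (\<lambda>x. x = 0) i 0 * W \<phi> (m - 1 - i) 0)"
  using conv_gen[of "W (\<lambda>x. 1 \<le> x \<and> \<phi> (x - 1))" "W \<phi>" m 0] by simp

lemma ar_pos: "ar (Suc l) (Suc h) = W (\<lambda>x. 1 \<le> x) l h"
proof (induction l arbitrary: h)
  case 0 then show ?case by simp
next
  case (Suc l)
  show ?case
  proof (cases h)
    case 0 then show ?thesis using Suc.IH[of 1] by simp
  next
    case (Suc h') then show ?thesis using Suc.IH[of "Suc h"] Suc.IH[of h'] by simp
  qed
qed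

lemma telescope: "N \<ge> 1 \<Longrightarrow> (\<Sum>k<N. if 1 \<le> k then f k - f (k + 2) else 0) = f 1 + f 2 - f N - f (N + 1 :: nat) - (0::int)"
proof (induction N rule: dec_induct)
  case base then show ?case by (simp add: numeral_2_eq_2)
next
  case (step n) then show ?case by (simp add: numeral_2_eq_2)
qed

lemma a_closed: "int (ar (n + 2) 0) = B n ((int n - 1) div 2)"
proof -
  have "ar (n + 2) 0 = W (\<lambda>x. 1 \<le> x) n 0" using ar_pos[of n 0] by (simp add: numeral_2_eq_2)
  then have "int (ar (n + 2) 0) = (\<Sum>k<n+1. if 1 \<le> k then g n 0 k else 0)"
    using W_closed[of n 0 "n+1" "\<lambda>x. 1 \<le> x"] by simp
  also have "\<dots> = (\<Sum>k<n+1. if 1 \<le> k then P n (int k) - P n (int (k + 2)) else 0)"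
    by (intro sum.cong) (auto simp: g_def ac_simps)
  also have "\<dots> = P n 1 + P n 2 - P n (int (n+1)) - P n (int (n + 1 + 1))"
    using telescope[of "n+1" "\<lambda>k. P n (int k)"] by (simp add: numeral_2_eq_2)
  also have "\<dots> = P n 1 + P n 2" by (simp add: P_big)
  also have "\<dots> = P n (-1) + P n (-2)" by (simp add: P_sym)
  also have "\<dots> = B n ((int n - 1) div 2)"
  proof (cases "even n")
    case True
    have "(int n + - 2) div 2 = (int n - 1) div 2" using True by presburger
    then show ?thesis using True unfolding P_def by auto
  next
    case False
    have "(int n + - 1) div 2 = (int n - 1) div 2" by simp
    then show ?thesis using False unfolding P_def by auto
  qed
  finally show ?thesis .
qed

lemma E_M1: "W (\<lambda>x. x = 0) (Suc n) 0 = W (\<lambda>x. x = 1) n 0"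
proof -
  have 1: "int (W (\<lambda>x. x = 0) n 1) = (\<Sum>k<n+2. if k = 0 then g n 1 k else 0)"
    by (rule W_closed) simp
  have 2: "int (W (\<lambda>x. x = 1) n 0) = (\<Sum>k<n+2. if k = 1 then g n 0 k else 0)"
    by (rule W_closed) simp
  have 3: "(\<Sum>k<n+2. if k = 0 then g n 1 k else 0) = g n 1 0"
    by (subst sum.delta) auto
  have 4: "(\<Sum>k<n+2. if k = 1 then g n 0 k else 0) = g n 0 1"
    by (subst sum.delta) auto
  have 5: "g n 1 0 = g n 0 1" unfolding g_def using P_sym[of n 1] by simp
  have "W (\<lambda>x. x = 0) (Suc n) 0 = W (\<lambda>x. x = 0) n 1" by simp
  then show ?thesis using 1 2 3 4 5 by linarith
qed



definition EE :: "real fps" where "EE = Abs_fps (\<lambda>n. real (W (\<lambda>x. x = 0) n 0))"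
definition MM :: "real fps" where "MM = Abs_fps (\<lambda>n. real (W (\<lambda>x. True) n 0))"
definition M1F :: "real fps" where "M1F = Abs_fps (\<lambda>n. real (W (\<lambda>x. x = 1) n 0))"
definition AA :: "real fps" where "AA = Abs_fps (\<lambda>n. real (ar n 0))"

lemma gf_E: "gf dyck_excursion = EE"
proof -
  have "dyck_excursion = (\<lambda>s. dyck_meander s \<and> (\<lambda>x. x = 0) (end_alt s))"
    by (auto simp: fun_eq_iff dyck_excursion_def)
  then show ?thesis unfolding gf_def EE_def using count_W[of "\<lambda>x. x = 0"] by simp
qed

lemma gf_M: "gf dyck_meander = MM"
proof -
  have "dyck_meander = (\<lambda>s. dyck_meander s \<and> (\<lambda>x. True) (end_alt s))"
    by (auto simp: fun_eq_iff)
  then show ?thesis unfolding gf_def MM_def using count_W[of "\<lambda>x. True"] by simp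
qed

lemma gf_M1: "gf dyck_meander1 = M1F"
proof -
  have "dyck_meander1 = (\<lambda>s. dyck_meander s \<and> (\<lambda>x. x = 1) (end_alt s))"
    by (auto simp: fun_eq_iff dyck_meander1_def)
  then show ?thesis unfolding gf_def M1F_def using count_W[of "\<lambda>x. x = 1"] by simp
qed

lemma gf_A: "gf cat_arch = AA"
  unfolding gf_def AA_def by (simp add: a_ar)

lemma W_split: "W (\<lambda>x. True) m h = W (\<lambda>x. x = 0) m h + W (\<lambda>x. 1 \<le> x) m h"
proof -
  have "(\<lambda>x::nat. True) = (\<lambda>x. x = 0 \<or> 1 \<le> x)" by auto
  moreover have "W (\<lambda>x. x = 0 \<or> 1 \<le> x) m h = W (\<lambda>x. x = 0) m h + W (\<lambda>x. 1 \<le> x) m h"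
    by (rule W_disj) auto
  ultimately show ?thesis by simp
qed

lemma F_A: "AA = fps_X ^ 2 * (MM - EE)"
proof (rule fps_ext)
  fix n
  show "fps_nth AA n = fps_nth (fps_X ^ 2 * (MM - EE)) n"
  proof (cases "n < 2")
    case True
    then have "n = 0 \<or> n = 1" by auto
    then show ?thesis by (auto simp: fps_X_power_mult_nth AA_def)
  next
    case False
    then obtain m where m: "n = Suc (Suc m)" by (metis add_2_eq_Suc le_add_diff_inverse not_less)
    have "ar (Suc (Suc m)) 0 = W (\<lambda>x. 1 \<le> x) m 0" using ar_pos[of m 0] by simp
    then show ?thesis using W_split[of m 0]
      by (simp add: m fps_X_power_mult_nth AA_def MM_def EE_def)
  qed
qed

lemma sum_conv: "(\<Sum>i<Suc k. f i) = (\<Sum>i=0..k. f i)"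
  by (simp add: atLeast0AtMost lessThan_Suc_atMost)

lemma F2: "MM - EE = fps_X * (EE * MM)"
proof (rule fps_ext)
  fix n
  show "fps_nth (MM - EE) n = fps_nth (fps_X * (EE * MM)) n"
  proof (cases n)
    case 0 then show ?thesis by (simp add: MM_def EE_def)
  next
    case (Suc k)
    have c: "W (\<lambda>x. 1 \<le> x \<and> True) (Suc k) 0 = (\<Sum>i<Suc k. W (\<lambda>x. x = 0) i 0 * W (\<lambda>x. True) (Suc k - 1 - i) 0)"
      by (rule conv_W)
    have "W (\<lambda>x. 1 \<le> x) (Suc k) 0 = (\<Sum>i=0..k. W (\<lambda>x. x = 0) i 0 * W (\<lambda>x. True) (k - i) 0)"
      using c by (simp only: sum_conv diff_Suc_1 simp_thms)
    then have "real (W (\<lambda>x. 1 \<le> x) (Suc k) 0) = (\<Sum>i=0..k. real (W (\<lambda>x. x = 0) i 0) * real (W (\<lambda>x. True) (k - i) 0))"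
      by (simp only: of_nat_sum of_nat_mult)
    moreover have "fps_nth (fps_X * (EE * MM)) n = (\<Sum>i=0..k. fps_nth EE i * fps_nth MM (k - i))"
      using fps_mult_nth[of EE MM k] by (simp add: Suc)
    ultimately show ?thesis using W_split[of "Suc k" 0]
      by (simp del: W.simps add: Suc MM_def EE_def)
  qed
qed

lemma F3: "M1F = fps_X * (EE * EE)"
proof (rule fps_ext)
  fix n
  show "fps_nth M1F n = fps_nth (fps_X * (EE * EE)) n"
  proof (cases n)
    case 0 then show ?thesis by (simp add: M1F_def)
  next
    case (Suc k)
    have c: "W (\<lambda>x. 1 \<le> x \<and> x - 1 = 0) (Suc k) 0 = (\<Sum>i<Suc k. W (\<lambda>x. x = 0) i 0 * W (\<lambda>x. x = 0) (Suc k - 1 - i) 0)"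
      by (rule conv_W)
    have e: "(\<lambda>x::nat. 1 \<le> x \<and> x - 1 = 0) = (\<lambda>x. x = 1)" by auto
    have "W (\<lambda>x. x = 1) (Suc k) 0 = (\<Sum>i=0..k. W (\<lambda>x. x = 0) i 0 * W (\<lambda>x. x = 0) (k - i) 0)"
      using c unfolding e by (simp only: sum_conv diff_Suc_1)
    then have "real (W (\<lambda>x. x = 1) (Suc k) 0) = (\<Sum>i=0..k. real (W (\<lambda>x. x = 0) i 0) * real (W (\<lambda>x. x = 0) (k - i) 0))"
      by (simp only: of_nat_sum of_nat_mult)
    moreover have "fps_nth (fps_X * (EE * EE)) n = (\<Sum>i=0..k. fps_nth EE i * fps_nth EE (k - i))"
      using fps_mult_nth[of EE EE k] by (simp add: Suc)
    ultimately show ?thesis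
      by (simp del: W.simps add: Suc M1F_def EE_def)
  qed
qed

lemma F4: "EE = 1 + fps_X * M1F"
proof (rule fps_ext)
  fix n
  show "fps_nth EE n = fps_nth (1 + fps_X * M1F) n"
  proof (cases n)
    case 0 then show ?thesis by (simp add: EE_def)
  next
    case (Suc k) then show ?thesis by (simp add: EE_def M1F_def E_M1 del: W.simps)
  qed
qed

lemma EE_nz: "EE \<noteq> 0"
proof
  assume "EE = 0"
  then have "fps_nth EE 0 = 0" by simp
  then show False by (simp add: EE_def)
qed

lemma fps_main: "AA = fps_X * (MM - EE - M1F) / EE"
proof -
  have "MM - EE - M1F = fps_X * (EE * MM) - fps_X * (EE * EE)"
    using F2 F3 by simp
  also have "\<dots> = fps_X * EE * (MM - EE)" by (simp add: algebra_simps)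
  finally have "MM - EE - M1F = fps_X * EE * (MM - EE)" .
  then have "fps_X * (MM - EE - M1F) = fps_X * (fps_X * EE * (MM - EE))" by simp
  also have "\<dots> = (fps_X ^ 2 * (MM - EE)) * EE" by (simp add: algebra_simps power2_eq_square)
  finally have "fps_X * (MM - EE - M1F) = (fps_X ^ 2 * (MM - EE)) * EE" .
  then show ?thesis using EE_nz F_A by simp
qed



lemma W_bound: "W \<phi> m h \<le> 2 ^ m"
proof (induction m arbitrary: h)
  case 0 then show ?case by simp
next
  case (Suc m)
  have "W \<phi> (Suc m) h \<le> W \<phi> m (Suc h) + W \<phi> m (h - 1)" by simp
  also have "\<dots> \<le> 2 ^ m + 2 ^ m" using Suc.IH by (intro add_mono) auto
  finally show ?case by simp
qed

lemma ar_bound: "ar n 0 \<le> 2 ^ n"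
proof (cases "n < 2")
  case True
  then have "n = 0 \<or> n = 1" by auto
  then show ?thesis by auto
next
  case False
  then obtain m where m: "n = Suc (Suc m)" by (metis add_2_eq_Suc le_add_diff_inverse not_less)
  have "ar n 0 = W (\<lambda>x. 1 \<le> x) m 0" using ar_pos[of m 0] m by simp
  also have "\<dots> \<le> 2 ^ m" by (rule W_bound)
  also have "\<dots> \<le> 2 ^ n" unfolding m by simp
  finally show ?thesis .
qed

lemma rad:
  fixes f :: "real fps"
  assumes b: "\<And>n. \<bar>fps_nth f n\<bar> \<le> 2 ^ n"
  shows "ereal (1/2) \<le> fps_conv_radius f"
  unfolding fps_conv_radius_def
proof (rule conv_radius_geI_ex')
  fix r :: real assume r: "0 < r" "ereal r < ereal (1/2)"
  then have r2: "r < 1/2" by simp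
  have "summable (\<lambda>n. (2 * r) ^ n)" using r r2 by (intro summable_geometric) simp
  moreover have nb: "norm (fps_nth f n * of_real r ^ n) \<le> (2 * r) ^ n" for n
  proof -
    have "norm (fps_nth f n * of_real r ^ n) = \<bar>fps_nth f n\<bar> * r ^ n"
      using r by (simp add: abs_mult)
    also have "\<dots> \<le> 2 ^ n * r ^ n" using b r by (intro mult_right_mono) auto
    also have "\<dots> = (2 * r) ^ n" by (simp add: power_mult_distrib)
    finally show ?thesis .
  qed
  ultimately show "summable (\<lambda>n. fps_nth f n * of_real r ^ n)"
    by (rule summable_comparison_test'[where N=0])
qed

definition R :: "real fps \<Rightarrow> bool" where "R f \<longleftrightarrow> ereal (1/2) \<le> fps_conv_radius f"

lemma R_EE: "R EE" unfolding R_def by (rule rad) (simp add: EE_def W_bound)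
lemma R_MM: "R MM" unfolding R_def by (rule rad) (simp add: MM_def W_bound)
lemma R_M1F: "R M1F" unfolding R_def by (rule rad) (simp add: M1F_def W_bound)
lemma R_AA: "R AA" unfolding R_def by (rule rad) (simp add: AA_def ar_bound)
lemma R_X: "R fps_X" unfolding R_def by simp
lemma R_X2: "R (fps_X ^ 2)" unfolding R_def by simp
lemma R_1: "R 1" unfolding R_def by simp
lemma R_mult: "R f \<Longrightarrow> R f2 \<Longrightarrow> R (f * f2)"
proof -
  assume "R f" "R f2"
  then have "ereal (1/2) \<le> min (fps_conv_radius f) (fps_conv_radius f2)" unfolding R_def by simp
  then show ?thesis unfolding R_def using fps_conv_radius_mult[of f f2] by (rule order.trans)
qed
lemma R_diff: "R f \<Longrightarrow> R f2 \<Longrightarrow> R (f - f2)"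
proof -
  assume "R f" "R f2"
  then have "ereal (1/2) \<le> min (fps_conv_radius f) (fps_conv_radius f2)" unfolding R_def by simp
  then show ?thesis unfolding R_def using fps_conv_radius_diff[of f f2] by (rule order.trans)
qed
lemma R_add: "R f \<Longrightarrow> R f2 \<Longrightarrow> R (f + f2)"
proof -
  assume "R f" "R f2"
  then have "ereal (1/2) \<le> min (fps_conv_radius f) (fps_conv_radius f2)" unfolding R_def by simp
  then show ?thesis unfolding R_def using fps_conv_radius_add[of f f2] by (rule order.trans)
qed

lemma R_lt: "R f \<Longrightarrow> \<bar>z::real\<bar> < 1/2 \<Longrightarrow> ereal (norm z) < fps_conv_radius f"
proof -
  assume "R f" "\<bar>z\<bar> < 1/2"
  then have "ereal (norm z) < ereal (1/2)" by simp
  then show ?thesis using \<open>R f\<close> unfolding R_def by (rule less_le_trans)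
qed

lemma ev_mult: "R f \<Longrightarrow> R f2 \<Longrightarrow> \<bar>z::real\<bar> < 1/2 \<Longrightarrow> eval_fps (f * f2) z = eval_fps f z * eval_fps f2 z"
  by (intro eval_fps_mult R_lt)
lemma ev_add: "R f \<Longrightarrow> R f2 \<Longrightarrow> \<bar>z::real\<bar> < 1/2 \<Longrightarrow> eval_fps (f + f2) z = eval_fps f z + eval_fps f2 z"
  by (intro eval_fps_add R_lt)
lemma ev_diff: "R f \<Longrightarrow> R f2 \<Longrightarrow> \<bar>z::real\<bar> < 1/2 \<Longrightarrow> eval_fps (f - f2) z = eval_fps f z - eval_fps f2 z"
  by (intro eval_fps_diff R_lt)

lemma quadE:
  assumes z: "\<bar>z\<bar> < 1/2"
  shows "eval_fps EE z = 1 + z^2 * (eval_fps EE z)^2"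
proof -
  have "eval_fps EE z = eval_fps (1 + fps_X * (fps_X * (EE * EE))) z"
    using F4 F3 by simp
  also have "\<dots> = 1 + z * (z * (eval_fps EE z * eval_fps EE z))"
    using z by (simp add: ev_add ev_mult R_1 R_X R_EE R_mult)
  finally show ?thesis by (simp add: power2_eq_square algebra_simps)
qed

lemma eqM:
  assumes z: "\<bar>z\<bar> < 1/2"
  shows "eval_fps MM z - eval_fps EE z = z * (eval_fps EE z * eval_fps MM z)"
proof -
  have "eval_fps MM z - eval_fps EE z = eval_fps (MM - EE) z"
    using z by (simp add: ev_diff R_MM R_EE)
  also have "\<dots> = eval_fps (fps_X * (EE * MM)) z" using F2 by simp
  also have "\<dots> = z * (eval_fps EE z * eval_fps MM z)"
    using z by (simp add: ev_mult R_X R_EE R_MM R_mult)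
  finally show ?thesis .
qed

lemma eqA:
  assumes z: "\<bar>z\<bar> < 1/2"
  shows "eval_fps AA z = z^2 * (eval_fps MM z - eval_fps EE z)"
proof -
  have "eval_fps AA z = eval_fps (fps_X ^ 2 * (MM - EE)) z" using F_A by simp
  also have "\<dots> = z^2 * (eval_fps MM z - eval_fps EE z)"
    using z by (simp add: ev_mult ev_diff R_X2 R_EE R_MM R_diff)
  finally show ?thesis .
qed

lemma sq_lt: "\<bar>x::real\<bar> < 1/2 \<Longrightarrow> x^2 < 1/4"
proof -
  assume "\<bar>x\<bar> < 1/2"
  then have "\<bar>x\<bar>^2 < (1/2)^2" by (intro power_strict_mono) auto
  then show ?thesis by (simp add: power2_eq_square)
qed

lemma root:
  assumes z: "\<bar>z\<bar> < 1/2"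
  shows "z^2 * eval_fps EE z = (1 - sqrt (1 - 4 * z^2)) / 2"
proof -
  define w where "w x = x^2 * eval_fps EE x" for x
  have quad: "(w x)^2 - w x + x^2 = 0" if "\<bar>x\<bar> < 1/2" for x
  proof -
    have "eval_fps EE x = 1 + x^2 * (eval_fps EE x)^2" by (rule quadE[OF that])
    moreover have "(w x)^2 - w x + x^2 = x^2 * (x^2 * (eval_fps EE x)^2 + 1 - eval_fps EE x)"
      unfolding w_def by (simp add: power2_eq_square algebra_simps)
    ultimately show ?thesis by simp
  qed
  have cont: "continuous_on {a..b} w" if "-1/2 < a" "b < 1/2" for a b
  proof -
    have sub: "{a..b} \<subseteq> eball 0 (fps_conv_radius EE)"
    proof
      fix x assume "x \<in> {a..b}"
      then have "\<bar>x\<bar> < 1/2" using that by auto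
      then show "x \<in> eball 0 (fps_conv_radius EE)"
        using R_lt[OF R_EE] by simp
    qed
    then have "continuous_on {a..b} (eval_fps EE)"
      using continuous_on_subset[OF continuous_on_eval_fps] by blast
    then show ?thesis unfolding w_def by (intro continuous_intros) (use sub in auto)
  qed
  define s where "s = sqrt (1 - 4 * z^2)"
  have zq: "z^2 < 1/4" using sq_lt[OF z] .
  have s2: "s^2 = 1 - 4 * z^2" unfolding s_def using zq by simp
  have s0: "s > 0" unfolding s_def using zq by simp
  have "(w z - (1 - s)/2) * (w z - (1 + s)/2) = (w z)^2 - w z + (1 - s^2) / 4"
    by (simp add: power2_eq_square field_simps)
  also have "\<dots> = (w z)^2 - w z + z^2" using s2 by simp
  also have "\<dots> = 0" by (rule quad[OF z])
  finally have "w z = (1 - s)/2 \<or> w z = (1 + s)/2" by simp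
  moreover have "w z \<noteq> (1 + s)/2"
  proof
    assume wz: "w z = (1 + s)/2"
    then have gt: "1/2 \<le> w z" using s0 by simp
    have w0: "w 0 \<le> 1/2" unfolding w_def by simp
    obtain x where x: "\<bar>x\<bar> \<le> \<bar>z\<bar>" "w x = 1/2"
    proof (cases "0 \<le> z")
      case True
      from IVT'[of w 0 "1/2" z] obtain x where "0 \<le> x" "x \<le> z" "w x = 1/2"
        using w0 gt True cont[of 0 z] z by auto
      then show ?thesis by (intro that[of x]) auto
    next
      case False
      from IVT2'[of w 0 "1/2" z] obtain x where "z \<le> x" "x \<le> 0" "w x = 1/2"
        using w0 gt False cont[of z 0] z by auto
      then show ?thesis by (intro that[of x]) auto
    qed
    then have "\<bar>x\<bar> < 1/2" using z by linarith
    then have "(w x)^2 - w x + x^2 = 0" "x^2 < 1/4" using quad sq_lt by auto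
    then show False using x(2) by (simp add: power2_eq_square)
  qed
  ultimately show ?thesis unfolding w_def s_def by simp
qed


lemma first_vals: "map (\<lambda>n. ar n 0) [0..<10] = [0, 0, 0, 1, 1, 3, 4, 10, 15, 35]"
  by (simp add: upt_rec numeral_eq_Suc)


lemma final_value:
  assumes z: "\<bar>z\<bar> < 1/2"
  shows "eval_fps AA z = (1/2) * (2 * z^2 + z - 1 + sqrt ((1 - 2*z) * (1 + 2*z) * (1 - z)^2)) / (1 - 2*z)"
proof -
  define e where "e = eval_fps EE z"
  define m where "m = eval_fps MM z"
  define a where "a = eval_fps AA z"
  have q: "e = 1 + z^2 * e^2" unfolding e_def by (rule quadE[OF z])
  have me: "m - e = z * (e * m)" unfolding e_def m_def by (rule eqM[OF z])
  have am: "a = z^2 * (m - e)" unfolding a_def e_def m_def by (rule eqA[OF z])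
  have rt: "z^2 * e = (1 - sqrt (1 - 4 * z^2)) / 2" unfolding e_def by (rule root[OF z])
  have ze: "1 - z * e \<noteq> 0"
  proof
    assume h: "1 - z * e = 0"
    then have ze1: "z * e = 1" by simp
    have "z * (e * m) = (z * e) * m" by (simp only: mult.assoc)
    then have "m - e = m" using me ze1 by simp
    then have "e = 0" by simp
    then show False using h by simp
  qed
  have z2: "1 - 2 * z \<noteq> 0" using z by auto
  have sq: "sqrt ((1 - 2*z) * (1 + 2*z) * (1 - z)^2) = (1 - z) * sqrt (1 - 4 * z^2)"
  proof -
    have eq: "(1 - 2*z) * (1 + 2*z) * (1 - z)^2 = (1 - 4 * z^2) * (1 - z)^2" by algebra
    have nn: "1 - z \<ge> 0" using z by auto
    have "sqrt ((1 - 2*z) * (1 + 2*z) * (1 - z)^2) = sqrt ((1 - 4 * z^2) * (1 - z)^2)" by (simp only: eq)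
    also have "\<dots> = sqrt (1 - 4 * z^2) * sqrt ((1 - z)^2)" by (rule real_sqrt_mult)
    also have "sqrt ((1 - z)^2) = 1 - z" using nn by simp
    finally show ?thesis by simp
  qed
  have s: "sqrt (1 - 4 * z^2) = 1 - 2 * z^2 * e" using rt by simp
  have V: "(1/2) * (2 * z^2 + z - 1 + sqrt ((1 - 2*z) * (1 + 2*z) * (1 - z)^2)) / (1 - 2*z)
        = z^2 * (1 - e + z * e) / (1 - 2 * z)"
  proof -
    have num: "(1/2) * (2 * z^2 + z - 1 + (1 - z) * (1 - 2 * z^2 * e)) = z^2 * (1 - e + z * e)" by algebra
    show ?thesis by (simp only: sq s num)
  qed
  have h1: "a * (1 - z * e) = z * (e - 1)"
  proof -
    have "m * (1 - z * e) = e" using me by algebra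
    have a3: "a = z^2 * (z * (e * m))" using am me by simp
    have "a * (1 - z * e) = z^2 * (z * e * (m * (1 - z * e)))" unfolding a3 by (simp add: algebra_simps)
    also have "\<dots> = z^2 * (z * e * e)" by (simp only: \<open>m * (1 - z * e) = e\<close>)
    also have "\<dots> = z * (z^2 * e^2)" by (simp add: power2_eq_square algebra_simps)
    also have "\<dots> = z * (e - 1)" using q by simp
    finally show ?thesis .
  qed
  have h2a: "z^2 * (1 - e + z * e) * (1 - z * e) - z * (e - 1) * (1 - 2 * z) = z * (1 - z) * (z^2 * e^2 - e + 1)"
    by (simp add: algebra_simps power2_eq_square)
  have "z^2 * e^2 - e + 1 = 0" using q by simp
  then have h2: "z^2 * (1 - e + z * e) * (1 - z * e) = z * (e - 1) * (1 - 2 * z)"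
    using h2a by simp
  have "a * (1 - 2 * z) * (1 - z * e) = (a * (1 - z * e)) * (1 - 2 * z)" by (simp add: algebra_simps)
  also have "\<dots> = z * (e - 1) * (1 - 2 * z)" by (simp only: h1)
  also have "\<dots> = z^2 * (1 - e + z * e) * (1 - z * e)" by (rule h2[symmetric])
  finally have "a * (1 - 2 * z) * (1 - z * e) = z^2 * (1 - e + z * e) * (1 - z * e)" .
  then have "a * (1 - 2 * z) = z^2 * (1 - e + z * e)" using ze by simp
  then have "a = z^2 * (1 - e + z * e) / (1 - 2 * z)" using z2 by (simp add: field_simps)
  then show ?thesis unfolding a_def[symmetric] V .
qed


theorem proposition3p2:
  fixes a :: "nat \<Rightarrow> nat" and A M E M1 :: "real fps"
  assumes "a = count_len cat_arch"
    and "A = gf cat_arch"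
    and "M = gf dyck_meander" and "E = gf dyck_excursion" and "M1 = gf dyck_meander1"
  shows "a 0 = 0 \<and> a 1 = 0 \<and>
    (\<forall>n\<ge>2. int (a n) = (if \<lfloor>(real n - 3) / 2\<rfloor> < 0 then 0
                        else int ((n - 2) choose nat \<lfloor>(real n - 3) / 2\<rfloor>))) \<and>
    A = fps_X * (M - E - M1) / E \<and>
    (\<forall>z::real. \<bar>z\<bar> < 1/2 \<longrightarrow>
       (\<lambda>n. real (a n) * z ^ n) sums
         ((1/2) * (2 * z^2 + z - 1 + sqrt ((1 - 2*z) * (1 + 2*z) * (1 - z)^2)) / (1 - 2*z))) \<and>
    map a [0..<10] = [0, 0, 0, 1, 1, 3, 4, 10, 15, 35]"
proof -
  have a: "a = (\<lambda>n. ar n 0)" using assms(1) a_ar by (auto simp: fun_eq_iff)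
  have fA: "A = AA" using assms(2) gf_A by simp
  have fM: "M = MM" using assms(3) gf_M by simp
  have fE: "E = EE" using assms(4) gf_E by simp
  have fM1: "M1 = M1F" using assms(5) gf_M1 by simp
  have c1: "a 0 = 0" by (simp add: a)
  have c2: "a 1 = 0" by (simp add: a)
  have c3: "\<forall>n\<ge>2. int (a n) = (if \<lfloor>(real n - 3) / 2\<rfloor> < 0 then 0
                        else int ((n - 2) choose nat \<lfloor>(real n - 3) / 2\<rfloor>))"
  proof (intro allI impI)
    fix n :: nat assume "2 \<le> n"
    then obtain k where k: "n = k + 2" by (metis add.commute le_add_diff_inverse)
    have "real n - 3 = real_of_int (int k - 1)" using k by simp
    then have fl: "\<lfloor>(real n - 3) / 2\<rfloor> = (int k - 1) div 2"
      using floor_divide_of_int_eq[of "int k - 1" 2] by simp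
    have "int (a n) = B k ((int k - 1) div 2)" using a_closed[of k] by (simp add: a k)
    then show "int (a n) = (if \<lfloor>(real n - 3) / 2\<rfloor> < 0 then 0
                        else int ((n - 2) choose nat \<lfloor>(real n - 3) / 2\<rfloor>))"
      unfolding fl B_def using k by auto
  qed
  have c4: "A = fps_X * (M - E - M1) / E" using fps_main fA fM fE fM1 by simp
  have c5: "\<forall>z::real. \<bar>z\<bar> < 1/2 \<longrightarrow>
       (\<lambda>n. real (a n) * z ^ n) sums
         ((1/2) * (2 * z^2 + z - 1 + sqrt ((1 - 2*z) * (1 + 2*z) * (1 - z)^2)) / (1 - 2*z))"
  proof (intro allI impI)
    fix z :: real assume z: "\<bar>z\<bar> < 1/2"
    have "(\<lambda>n. fps_nth AA n * z ^ n) sums eval_fps AA z"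
      by (rule sums_eval_fps[OF R_lt[OF R_AA z]])
    then show "(\<lambda>n. real (a n) * z ^ n) sums
         ((1/2) * (2 * z^2 + z - 1 + sqrt ((1 - 2*z) * (1 + 2*z) * (1 - z)^2)) / (1 - 2*z))"
      using final_value[OF z] by (simp add: AA_def a)
  qed
  have c6: "map a [0..<10] = [0, 0, 0, 1, 1, 3, 4, 10, 15, 35]" using first_vals by (simp only: a)
  show ?thesis using c1 c2 c3 c4 c5 c6 by blast
qed

end
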